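(* For a threshold graph $G$ and an integer $d\ge0$, $\mathrm{degen}(G)\ge d$ if and only if $G$ contains a subgraph isomorphic to $K_{d+1}$.
   Context: A threshold graph on $n\ge1$ vertices is built from a base vertex $v_0$ by successively adding $v_1,\dots,v_{n-1}$, each either isolated (adjacent to no earlier vertex) or dominating (adjacent to all earlier vertices). The degeneracy of a graph $G$ is $\mathrm{degen}(G)=\max_{H}\min_{v\in V(H)}\deg_H(v)$, the maximum over nonempty induced subgraphs $H$ of $G$ of the minimum degree of $H$; equivalently, the largest $k$ such that the $k$-core of $G$ (the maximal induced subgraph of minimum degree at least $k$) is nonempty. *)

theory Defs
  imports Main
begin

text \<open>A graph is given by a finite vertex set V and an adjacency relation E
  (only its restriction to V matters).\<close>

inductive threshold_graph :: "'a set \<Rightarrow> ('a \<Rightarrow> 'a \<Rightarrow> bool) \<Rightarrow> bool" where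
  base: "\<not> E v v \<Longrightarrow> threshold_graph {v} E"
| add_isolated: "threshold_graph V E \<Longrightarrow> v \<notin> V \<Longrightarrow> \<not> E v v \<Longrightarrow>
     (\<forall>u\<in>V. \<not> E v u \<and> \<not> E u v) \<Longrightarrow> threshold_graph (insert v V) E"
| add_dominating: "threshold_graph V E \<Longrightarrow> v \<notin> V \<Longrightarrow> \<not> E v v \<Longrightarrow>
     (\<forall>u\<in>V. E v u \<and> E u v) \<Longrightarrow> threshold_graph (insert v V) E"

definition deg_in :: "'a set \<Rightarrow> ('a \<Rightarrow> 'a \<Rightarrow> bool) \<Rightarrow> 'a \<Rightarrow> nat" where
  "deg_in H E v = card {u \<in> H. E v u}"

definition min_degree :: "'a set \<Rightarrow> ('a \<Rightarrow> 'a \<Rightarrow> bool) \<Rightarrow> nat" where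
  "min_degree H E = Min (deg_in H E ` H)"

definition degen :: "'a set \<Rightarrow> ('a \<Rightarrow> 'a \<Rightarrow> bool) \<Rightarrow> nat" where
  "degen V E = Max {min_degree H E | H. H \<subseteq> V \<and> H \<noteq> {}}"

definition has_complete_subgraph :: "'a set \<Rightarrow> ('a \<Rightarrow> 'a \<Rightarrow> bool) \<Rightarrow> nat \<Rightarrow> bool" where
  "has_complete_subgraph V E m \<longleftrightarrow>
     (\<exists>f :: nat \<Rightarrow> 'a. inj_on f {..<m} \<and> f ` {..<m} \<subseteq> V \<and>
        (\<forall>i<m. \<forall>j<m. i \<noteq> j \<longrightarrow> E (f i) (f j)))"

end

theory Submission
  imports Defs
begin

lemma tg_finite: "threshold_graph V E \<Longrightarrow> finite V \<and> V \<noteq> {}"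
  by (induction rule: threshold_graph.induct) auto

lemma tg_irrefl: "threshold_graph V E \<Longrightarrow> v \<in> V \<Longrightarrow> \<not> E v v"
  by (induction rule: threshold_graph.induct) auto

lemma key:
  assumes "threshold_graph V E"
  shows "H \<subseteq> V \<Longrightarrow> H \<noteq> {} \<Longrightarrow> (\<forall>v\<in>H. d \<le> deg_in H E v) \<Longrightarrow>
     \<exists>C \<subseteq> H. card C = Suc d \<and> (\<forall>x\<in>C. \<forall>y\<in>C. x \<noteq> y \<longrightarrow> E x y)"
  using assms
proof (induction arbitrary: H d rule: threshold_graph.induct)
  case (base E v)
  then have H: "H = {v}" by auto
  have "deg_in H E v = 0" using base H by (simp add: deg_in_def)
  then have "d = 0" using base H by auto
  then show ?case using H by auto
next
  case (add_isolated V E v)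
  show ?case
  proof (cases "v \<in> H")
    case True
    have "{u \<in> H. E v u} = {}" using add_isolated True by auto
    then have "deg_in H E v = 0" unfolding deg_in_def by (metis card.empty)
    then have "d = 0" using add_isolated.prems(3) True by (metis le_zero_eq)
    moreover obtain x where "x \<in> H" using add_isolated by auto
    ultimately show ?thesis by (intro exI[of _ "{x}"]) auto
  next
    case False
    then have "H \<subseteq> V" using add_isolated by auto
    then show ?thesis using add_isolated.IH add_isolated.prems(2,3) by blast
  qed
next
  case (add_dominating V E v)
  have finV: "finite V" using tg_finite[OF add_dominating(1)] by simp
  show ?case
  proof (cases "v \<in> H")
    case False
    then have "H \<subseteq> V" using add_dominating by auto
    then show ?thesis using add_dominating.IH add_dominating.prems(2,3) by blast
  next
    case True
    show ?thesis
    proof (cases d)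
      case 0
      obtain x where "x \<in> H" using add_dominating by auto
      then show ?thesis using 0 by (intro exI[of _ "{x}"]) auto
    next
      case (Suc d')
      define H' where "H' = H - {v}"
      have H'V: "H' \<subseteq> V" using add_dominating H'_def by auto
      have finH': "finite H'" using H'V finV finite_subset by blast
      have "deg_in H E v \<ge> 1" using True add_dominating.prems(3) Suc by auto
      then have "{u \<in> H. E v u} \<noteq> {}" unfolding deg_in_def by (metis card.empty not_one_le_zero)
      then obtain u where "u \<in> H" "E v u" by auto
      then have "u \<in> H'" using add_dominating H'_def by auto
      then have ne: "H' \<noteq> {}" by auto
      have degs: "\<forall>w\<in>H'. d' \<le> deg_in H' E w"
      proof
        fix w assume w: "w \<in> H'"
        have Evw: "E w v" using w H'V add_dominating by auto
        have "{x \<in> H. E w x} = insert v {x \<in> H'. E w x}"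
          using True Evw H'_def by auto
        moreover have "v \<notin> {x \<in> H'. E w x}" using H'_def by auto
        ultimately have "deg_in H E w = Suc (deg_in H' E w)"
          using finH' by (simp add: deg_in_def)
        moreover have "d \<le> deg_in H E w" using add_dominating w H'_def by auto
        ultimately show "d' \<le> deg_in H' E w" using Suc by simp
      qed
      obtain C where C: "C \<subseteq> H'" "card C = Suc d'" "\<forall>x\<in>C. \<forall>y\<in>C. x \<noteq> y \<longrightarrow> E x y"
        using add_dominating.IH[OF H'V ne degs] by blast
      have finC: "finite C" using C(1) finH' finite_subset by blast
      have vC: "v \<notin> C" using C(1) H'_def by auto
      have CV: "C \<subseteq> V" using C(1) H'V by auto
      show ?thesis
      proof (intro exI[of _ "insert v C"] conjI)
        show "insert v C \<subseteq> H" using C(1) True H'_def by auto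
        show "card (insert v C) = Suc d" using finC vC C(2) Suc by simp
        show "\<forall>x\<in>insert v C. \<forall>y\<in>insert v C. x \<noteq> y \<longrightarrow> E x y"
          using C(3) CV add_dominating(4) by auto
      qed
    qed
  qed
qed

theorem mainTheorem11:
  fixes V :: "'a set" and E :: "'a \<Rightarrow> 'a \<Rightarrow> bool" and d :: nat
  assumes "threshold_graph V E"
  shows "degen V E \<ge> d \<longleftrightarrow> has_complete_subgraph V E (d + 1)"
proof -
  have finV: "finite V" and neV: "V \<noteq> {}" using tg_finite[OF assms] by auto
  define S where "S = {min_degree H E | H. H \<subseteq> V \<and> H \<noteq> {}}"
  have finS: "finite S" unfolding S_def
    using finV by (simp add: setcompr_eq_image image_Collect_subsetI)
  have neS: "S \<noteq> {}" using neV unfolding S_def by auto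
  show ?thesis
  proof
    assume "degen V E \<ge> d"
    then have "Max S \<ge> d" by (simp add: degen_def S_def)
    moreover have "Max S \<in> S" using finS neS by simp
    ultimately have "\<exists>H. H \<subseteq> V \<and> H \<noteq> {} \<and> min_degree H E \<ge> d"
      unfolding S_def by auto
    then obtain H where H: "H \<subseteq> V" "H \<noteq> {}" "min_degree H E \<ge> d" by blast
    have finH: "finite H" using H finV finite_subset by blast
    have degs: "\<forall>v\<in>H. d \<le> deg_in H E v"
    proof
      fix v assume "v \<in> H"
      then have "min_degree H E \<le> deg_in H E v"
        unfolding min_degree_def using finH by simp
      then show "d \<le> deg_in H E v" using H by simp
    qed
    then obtain C where C: "C \<subseteq> H" "card C = Suc d" "\<forall>x\<in>C. \<forall>y\<in>C. x \<noteq> y \<longrightarrow> E x y"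
      using key[OF assms H(1,2) degs] by blast
    have "finite C" using C(1) finH finite_subset by blast
    then obtain f where f: "bij_betw f {..<Suc d} C"
      using C(2) finite_same_card_bij[of "{..<Suc d}" C] by auto
    show "has_complete_subgraph V E (d + 1)"
      unfolding has_complete_subgraph_def
    proof (intro exI[of _ f] conjI allI impI)
      show "inj_on f {..<d + 1}" using f by (simp add: bij_betw_def)
      show "f ` {..<d + 1} \<subseteq> V" using f C(1) H(1) by (auto simp: bij_betw_def)
      fix i j assume "i < d + 1" "j < d + 1" "i \<noteq> j"
      then show "E (f i) (f j)" using f C(3)
        by (auto simp: bij_betw_def inj_on_def)
    qed
  next
    assume "has_complete_subgraph V E (d + 1)"
    then obtain f where f: "inj_on f {..<d+1}" "f ` {..<d+1} \<subseteq> V"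
      "\<forall>i<d+1. \<forall>j<d+1. i \<noteq> j \<longrightarrow> E (f i) (f j)"
      unfolding has_complete_subgraph_def by blast
    define C where "C = f ` {..<d+1}"
    have cardC: "card C = d + 1" using f(1) C_def by (simp add: card_image)
    have finC: "finite C" using C_def by simp
    have neC: "C \<noteq> {}" using C_def by auto
    have "\<forall>x\<in>C. d \<le> deg_in C E x"
    proof
      fix x assume x: "x \<in> C"
      have "C - {x} \<subseteq> {u \<in> C. E x u}"
        using x f(3) C_def by auto
      then have "card (C - {x}) \<le> deg_in C E x"
        unfolding deg_in_def by (intro card_mono) (auto simp: finC)
      moreover have "card (C - {x}) = d" using x cardC finC by simp
      ultimately show "d \<le> deg_in C E x" by simp
    qed
    then have "d \<le> min_degree C E" unfolding min_degree_def using finC neC by simp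
    moreover have "min_degree C E \<in> S" unfolding S_def using f(2) C_def neC by auto
    ultimately have "d \<le> Max S" using finS by (meson Max_ge order_trans)
    then show "degen V E \<ge> d" by (simp add: degen_def S_def)
  qed
qed

end
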